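(* Let $G=(V,E)$ be a finite simple graph which is $S_{1,1,5}$-free, $K_4$-free, diamond-free and butterfly-free. Let $xy\in E$ and let $r$ be a vertex with $rx\in E$ and $ry\notin E$. For $i\ge 1$ let $N_i=\{z\in V:\operatorname{dist}_G(z,\{x,y\})=i\}$. Assume $N_2$ is an independent set and every vertex of $N_3$ has exactly one neighbor in $N_2$. If $|N_2|\ge 5$ and $N_5\ne\emptyset$, then $G[N_5]$ contains neither an induced path on three vertices nor a triangle.
   Context: $S_{1,1,5}$ is the tree with a center $u$ adjacent to $a$, $b$ and $z_1$, where $u,z_1,\dots,z_5$ is an induced path, and no other edges. A diamond is $K_4$ minus one edge; a butterfly consists of two disjoint edges (inducing $2K_2$) together with a vertex adjacent to all four of their endpoints. $\operatorname{dist}_G(z,\{x,y\})$ is the minimum of the distances from $z$ to $x$ and to $y$. *)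

theory Defs
  imports Main
begin

definition simple_graph :: "'a set \<Rightarrow> ('a \<Rightarrow> 'a \<Rightarrow> bool) \<Rightarrow> bool" where
  "simple_graph V E \<longleftrightarrow> finite V \<and> (\<forall>u v. E u v \<longrightarrow> u \<in> V \<and> v \<in> V)
     \<and> (\<forall>u v. E u v \<longrightarrow> E v u) \<and> (\<forall>u. \<not> E u u)"

definition has_induced :: "'a set \<Rightarrow> ('a \<Rightarrow> 'a \<Rightarrow> bool) \<Rightarrow> nat \<Rightarrow> (nat \<Rightarrow> nat \<Rightarrow> bool) \<Rightarrow> bool" where
  "has_induced W E k H \<longleftrightarrow> (\<exists>f. inj_on f {..<k} \<and> f ` {..<k} \<subseteq> W \<and>
      (\<forall>i<k. \<forall>j<k. E (f i) (f j) \<longleftrightarrow> H i j))"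

definition sym_edges :: "(nat \<times> nat) list \<Rightarrow> nat \<Rightarrow> nat \<Rightarrow> bool" where
  "sym_edges es i j \<longleftrightarrow> (i, j) \<in> set es \<or> (j, i) \<in> set es"

(* S_{1,1,5}: u=0, a=1, b=2, z1..z5 = 3..7; path u z1 ... z5. *)
definition S115 :: "nat \<Rightarrow> nat \<Rightarrow> bool" where
  "S115 = sym_edges [(0,1),(0,2),(0,3),(3,4),(4,5),(5,6),(6,7)]"

definition K4 :: "nat \<Rightarrow> nat \<Rightarrow> bool" where
  "K4 = sym_edges [(0,1),(0,2),(0,3),(1,2),(1,3),(2,3)]"

definition diamond :: "nat \<Rightarrow> nat \<Rightarrow> bool" where
  "diamond = sym_edges [(0,1),(0,2),(0,3),(1,2),(1,3)]"

definition butterfly :: "nat \<Rightarrow> nat \<Rightarrow> bool" where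
  "butterfly = sym_edges [(1,2),(3,4),(0,1),(0,2),(0,3),(0,4)]"

definition P3 :: "nat \<Rightarrow> nat \<Rightarrow> bool" where
  "P3 = sym_edges [(0,1),(1,2)]"

definition K3 :: "nat \<Rightarrow> nat \<Rightarrow> bool" where
  "K3 = sym_edges [(0,1),(1,2),(0,2)]"

fun walk :: "'a set \<Rightarrow> ('a \<Rightarrow> 'a \<Rightarrow> bool) \<Rightarrow> nat \<Rightarrow> 'a \<Rightarrow> 'a \<Rightarrow> bool" where
  "walk V E 0 u v \<longleftrightarrow> u = v \<and> u \<in> V"
| "walk V E (Suc n) u v \<longleftrightarrow> (\<exists>w. E u w \<and> walk V E n w v)"

definition dist_set_eq :: "'a set \<Rightarrow> ('a \<Rightarrow> 'a \<Rightarrow> bool) \<Rightarrow> 'a \<Rightarrow> 'a set \<Rightarrow> nat \<Rightarrow> bool" where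
  "dist_set_eq V E z S i \<longleftrightarrow> (\<exists>s\<in>S. walk V E i z s) \<and> (\<forall>j<i. \<forall>s\<in>S. \<not> walk V E j z s)"

definition layer :: "'a set \<Rightarrow> ('a \<Rightarrow> 'a \<Rightarrow> bool) \<Rightarrow> 'a \<Rightarrow> 'a \<Rightarrow> nat \<Rightarrow> 'a set" where
  "layer V E x y i = {z \<in> V. dist_set_eq V E z {x, y} i}"

end

theory Submission
  imports Defs
begin


lemma walk_in_V: "simple_graph V E \<Longrightarrow> walk V E n u v \<Longrightarrow> u \<in> V"
  by (cases n) (auto simp: simple_graph_def)

lemma layer_sym: "layer V E x y i = layer V E y x i"
  unfolding layer_def dist_set_eq_def by (simp add: insert_commute)

lemma layer_adj:
  assumes g: "simple_graph V E" and u: "u \<in> layer V E x y i" and v: "v \<in> layer V E x y j" and e: "E u v"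
  shows "j \<le> Suc i"
proof (rule ccontr)
  assume "\<not> j \<le> Suc i"
  from u obtain s where s: "s \<in> {x,y}" "walk V E i u s" unfolding layer_def dist_set_eq_def by auto
  have "E v u" using e g by (auto simp: simple_graph_def)
  hence w: "walk V E (Suc i) v s" using s by (simp only: walk.simps) blast
  have "\<forall>j'<j. \<forall>s\<in>{x,y}. \<not> walk V E j' v s" using v unfolding layer_def dist_set_eq_def by blast
  moreover have "Suc i < j" using \<open>\<not> j \<le> Suc i\<close> by simp
  ultimately show False using w s by blast
qed

lemma layer_down:
  assumes g: "simple_graph V E" and z: "z \<in> layer V E x y (Suc i)"
  shows "\<exists>w\<in>layer V E x y i. E z w"
proof -
  from z obtain s where s: "s \<in> {x,y}" "walk V E (Suc i) z s" unfolding layer_def dist_set_eq_def by auto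
  then obtain w where w: "E z w" "walk V E i w s" by auto
  have wV: "w \<in> V" using w g by (auto simp: simple_graph_def)
  have "\<forall>j<i. \<forall>s\<in>{x,y}. \<not> walk V E j w s"
  proof (intro allI impI ballI notI)
    fix j s' assume "j < i" "s' \<in> {x,y}" "walk V E j w s'"
    hence ww: "walk V E (Suc j) z s'" using w by (simp only: walk.simps) blast
    have "\<forall>j'<Suc i. \<forall>s\<in>{x,y}. \<not> walk V E j' z s" using z unfolding layer_def dist_set_eq_def by blast
    moreover have "Suc j < Suc i" using \<open>j < i\<close> by simp
    ultimately show False using ww \<open>s' \<in> {x,y}\<close> by blast
  qed
  hence "w \<in> layer V E x y i" using wV w s unfolding layer_def dist_set_eq_def by auto
  with w show ?thesis by auto
qed

lemma layer_unique: "z \<in> layer V E x y i \<Longrightarrow> z \<in> layer V E x y j \<Longrightarrow> i = j"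
  unfolding layer_def dist_set_eq_def by (cases i j rule: linorder_cases) blast+

lemma layer0: "x \<in> V \<Longrightarrow> y \<in> V \<Longrightarrow> layer V E x y 0 = {x, y}"
  unfolding layer_def dist_set_eq_def by auto

lemma layer_V: "z \<in> layer V E x y i \<Longrightarrow> z \<in> V"
  unfolding layer_def by auto

lemma mk_induced:
  assumes "distinct vs" "set vs \<subseteq> W" "\<forall>i<length vs. \<forall>j<length vs. E (vs!i) (vs!j) \<longleftrightarrow> H i j"
  shows "has_induced W E (length vs) H"
  unfolding has_induced_def
proof (intro exI[of _ "\<lambda>i. vs ! i"] conjI)
  show "inj_on ((!) vs) {..<length vs}" using assms(1) by (simp add: inj_on_def nth_eq_iff_index_eq)
  show "(!) vs ` {..<length vs} \<subseteq> W" using assms(2) by (auto simp: set_conv_nth)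
qed (use assms(3) in auto)

lemma S115I:
  assumes g: "simple_graph V E" and inV: "set [u,a,b,z1,z2,z3,z4,z5] \<subseteq> V"
    and d: "distinct [u,a,b,z1,z2,z3,z4,z5]"
    and e: "E u a" "E u b" "E u z1" "E z1 z2" "E z2 z3" "E z3 z4" "E z4 z5"
    and n: "\<not> E a b" "\<not> E a z1" "\<not> E a z2" "\<not> E a z3" "\<not> E a z4" "\<not> E a z5"
      "\<not> E b z1" "\<not> E b z2" "\<not> E b z3" "\<not> E b z4" "\<not> E b z5"
      "\<not> E u z2" "\<not> E u z3" "\<not> E u z4" "\<not> E u z5"
      "\<not> E z1 z3" "\<not> E z1 z4" "\<not> E z1 z5" "\<not> E z2 z4" "\<not> E z2 z5" "\<not> E z3 z5"
  shows "has_induced V E 8 S115"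
proof -
  have sym: "\<And>p q. E p q \<longleftrightarrow> E q p" and irr: "\<And>p. \<not> E p p" using g by (auto simp: simple_graph_def)
  have "has_induced V E (length [u,a,b,z1,z2,z3,z4,z5]) S115"
    apply (rule mk_induced[OF d inV])
    apply (simp add: less_Suc_eq numeral_eq_Suc S115_def sym_edges_def all_conj_distrib)
    using e n irr by (auto simp: sym)
  thus ?thesis by (simp add: eval_nat_numeral)
qed

lemma dk4:
  assumes g: "simple_graph V E" and nK: "\<not> has_induced V E 4 K4" and nD: "\<not> has_induced V E 4 diamond"
    and inV: "set [u,v,s,t] \<subseteq> V" and d: "distinct [u,v,s,t]"
    and e: "E u v" "E u s" "E u t" "E v s" "E v t"
  shows False
proof -
  have sym: "\<And>p q. E p q \<longleftrightarrow> E q p" and irr: "\<And>p. \<not> E p p" using g by (auto simp: simple_graph_def)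
  show False
  proof (cases "E s t")
    case True
    have "has_induced V E (length [u,v,s,t]) K4"
      apply (rule mk_induced[OF d inV])
      apply (simp add: less_Suc_eq numeral_eq_Suc K4_def sym_edges_def all_conj_distrib)
      using e True irr by (auto simp: sym)
    thus False using nK by (simp add: eval_nat_numeral)
  next
    case False
    have "has_induced V E (length [u,v,s,t]) diamond"
      apply (rule mk_induced[OF d inV])
      apply (simp add: less_Suc_eq numeral_eq_Suc diamond_def sym_edges_def all_conj_distrib)
      using e False irr by (auto simp: sym)
    thus False using nD by (simp add: eval_nat_numeral)
  qed
qed

lemma butterflyI:
  assumes g: "simple_graph V E" and inV: "set [u,a1,a2,b1,b2] \<subseteq> V" and d: "distinct [u,a1,a2,b1,b2]"
    and e: "E a1 a2" "E b1 b2" "E u a1" "E u a2" "E u b1" "E u b2"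
    and n: "\<not> E a1 b1" "\<not> E a1 b2" "\<not> E a2 b1" "\<not> E a2 b2"
  shows "has_induced V E 5 butterfly"
proof -
  have sym: "\<And>p q. E p q \<longleftrightarrow> E q p" and irr: "\<And>p. \<not> E p p" using g by (auto simp: simple_graph_def)
  have "has_induced V E (length [u,a1,a2,b1,b2]) butterfly"
    apply (rule mk_induced[OF d inV])
    apply (simp add: less_Suc_eq numeral_eq_Suc butterfly_def sym_edges_def all_conj_distrib)
    using e n irr by (auto simp: sym)
  thus ?thesis by (simp add: eval_nat_numeral)
qed

lemma get3:
  assumes "has_induced W E 3 H"
  shows "\<exists>f0 f1 f2. f0 \<in> W \<and> f1 \<in> W \<and> f2 \<in> W \<and> distinct [f0,f1,f2] \<and>
     (E f0 f1 \<longleftrightarrow> H 0 1) \<and> (E f1 f2 \<longleftrightarrow> H 1 2) \<and> (E f0 f2 \<longleftrightarrow> H 0 2)"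
proof -
  obtain f where f: "inj_on f {..<3}" "f ` {..<3} \<subseteq> W" "\<forall>i<3. \<forall>j<3. E (f i) (f j) \<longleftrightarrow> H i j"
    using assms unfolding has_induced_def by blast
  have "f 0 \<noteq> f 1" "f 0 \<noteq> f 2" "f 1 \<noteq> f 2" by (rule inj_on_contraD[OF f(1)]; simp)+
  hence "distinct [f 0, f 1, f 2]" by simp
  moreover have "f 0 \<in> W" "f 1 \<in> W" "f 2 \<in> W" using f(2) by auto
  ultimately show ?thesis using f(3) by (intro exI[of _ "f 0"] exI[of _ "f 1"] exI[of _ "f 2"]) auto
qed

lemma four_elems:
  assumes "finite S" "4 \<le> card S"
  obtains a b c d where "a \<in> S" "b \<in> S" "c \<in> S" "d \<in> S" "distinct [a,b,c,d]"
proof -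
  obtain T where T: "T \<subseteq> S" "card T = 4" using obtain_subset_with_card_n[OF assms(2)] by blast
  from T(2) obtain a B where aB: "T = insert a B" "a \<notin> B" "card B = 3"
    using card_Suc_eq[of T 3] by (auto simp: numeral_eq_Suc)
  then obtain b c d where "B = {b,c,d}" "b\<noteq>c" "c\<noteq>d" "b\<noteq>d" by (auto simp: card_3_iff)
  then show ?thesis using that T(1) aB by auto
qed

lemma two_elems:
  assumes "finite S" "2 \<le> card S"
  obtains a b where "a \<in> S" "b \<in> S" "a \<noteq> b"
proof -
  obtain T where T: "T \<subseteq> S" "card T = 2" using obtain_subset_with_card_n[OF assms(2)] by blast
  then obtain a b where "T = {a,b}" "a \<noteq> b" by (auto simp: card_2_iff)
  then show ?thesis using that T(1) by auto
qed

lemma three_elems: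
  assumes "finite S" "3 \<le> card S"
  obtains a b c where "a \<in> S" "b \<in> S" "c \<in> S" "a \<noteq> b" "a \<noteq> c" "b \<noteq> c"
proof -
  obtain T where T: "T \<subseteq> S" "card T = 3" using obtain_subset_with_card_n[OF assms(2)] by blast
  then obtain a b c where "T = {a,b,c}" "a \<noteq> b" "b \<noteq> c" "a \<noteq> c" by (auto simp: card_3_iff)
  then show ?thesis using that T(1) by auto
qed

lemma pigeon_A:
  assumes "distinct [q1,q2,q3,q4]" "\<forall>q\<in>{q1,q2,q3,q4}. PA q \<or> PB q \<or> PC q"
    "\<forall>u\<in>{q1,q2,q3,q4}. \<forall>v\<in>{q1,q2,q3,q4}. PA u \<longrightarrow> PA v \<longrightarrow> u = v"
    "\<forall>u\<in>{q1,q2,q3,q4}. \<forall>v\<in>{q1,q2,q3,q4}. PC u \<longrightarrow> PC v \<longrightarrow> u = v"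
    "\<forall>u\<in>{q1,q2,q3,q4}. \<forall>v\<in>{q1,q2,q3,q4}. \<forall>w\<in>{q1,q2,q3,q4}. PB u \<longrightarrow> PB v \<longrightarrow> PB w \<longrightarrow> u \<noteq> v \<longrightarrow> u \<noteq> w \<longrightarrow> v \<noteq> w \<longrightarrow> False"
    "\<forall>u\<in>{q1,q2,q3,q4}. \<forall>v\<in>{q1,q2,q3,q4}. \<forall>w\<in>{q1,q2,q3,q4}. PB u \<longrightarrow> PB v \<longrightarrow> PC w \<longrightarrow> u \<noteq> v \<longrightarrow> False"
  shows False
proof -
  define S where "S = {q1,q2,q3,q4}"
  have cS: "card S = 4" using assms(1) unfolding S_def by simp
  have fS: "finite S" unfolding S_def by simp
  define SA where "SA = {q\<in>S. PA q}"
  define SC where "SC = {q\<in>S. PC q}"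
  define SB where "SB = {q\<in>S. \<not> PA q \<and> \<not> PC q}"
  have fin: "finite SA" "finite SB" "finite SC" using fS unfolding SA_def SB_def SC_def by auto
  have cA: "card SA \<le> 1" using assms(3) fin(1) unfolding SA_def S_def
    by (simp only: One_nat_def card_le_Suc0_iff_eq) blast
  have cC: "card SC \<le> 1" using assms(4) fin(3) unfolding SC_def S_def
    by (simp only: One_nat_def card_le_Suc0_iff_eq) blast
  have "S \<subseteq> SA \<union> SB \<union> SC" unfolding SA_def SB_def SC_def by auto
  hence "card S \<le> card (SA \<union> SB \<union> SC)" using fin by (intro card_mono) auto
  also have "\<dots> \<le> card SA + card SB + card SC" using fin
    by (meson card_Un_le add_right_mono le_trans)
  finally have c: "4 \<le> card SA + card SB + card SC" using cS by simp
  have PBSB: "\<And>q. q \<in> SB \<Longrightarrow> PB q \<and> q \<in> S" using assms(2) unfolding SB_def S_def by blast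
  show False
  proof (cases "SC = {}")
    case True
    hence "3 \<le> card SB" using c cA by simp
    then obtain a b d where "a \<in> SB" "b \<in> SB" "d \<in> SB" "a \<noteq> b" "a \<noteq> d" "b \<noteq> d"
      using three_elems fin(2) by metis
    then show False using assms(5) PBSB unfolding S_def by blast
  next
    case False
    then obtain w where w: "w \<in> SC" by blast
    have "2 \<le> card SB" using c cA cC by simp
    then obtain a b where "a \<in> SB" "b \<in> SB" "a \<noteq> b" using two_elems fin(2) by metis
    then show False using assms(6) PBSB w unfolding S_def SC_def by blast
  qed
qed

definition close :: "nat \<Rightarrow> nat \<Rightarrow> bool" where "close i j \<longleftrightarrow> i \<le> Suc j \<and> j \<le> Suc i"

lemma S115L:
  assumes g: "simple_graph V E" and adj: "\<And>u v i j. u \<in> N i \<Longrightarrow> v \<in> N j \<Longrightarrow> E u v \<Longrightarrow> j \<le> Suc i"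
    and NV: "\<And>z i. z \<in> N i \<Longrightarrow> z \<in> V" and NU: "\<And>z i j. z \<in> N i \<Longrightarrow> z \<in> N j \<Longrightarrow> i = j"
    and mem: "u \<in> N lu" "a \<in> N la" "b \<in> N lb" "pa \<in> N lpa" "pb \<in> N lpb" "pc \<in> N lpc" "pd \<in> N lpd" "pe \<in> N lpe"
    and e: "E u a" "E u b" "E u pa" "E pa pb" "E pb pc" "E pc pd" "E pd pe"
    and n: "close la lb \<Longrightarrow> \<not> E a b" "close la lpa \<Longrightarrow> \<not> E a pa" "close la lpb \<Longrightarrow> \<not> E a pb" "close la lpc \<Longrightarrow> \<not> E a pc" "close la lpd \<Longrightarrow> \<not> E a pd" "close la lpe \<Longrightarrow> \<not> E a pe" "close lb lpa \<Longrightarrow> \<not> E b pa" "close lb lpb \<Longrightarrow> \<not> E b pb" "close lb lpc \<Longrightarrow> \<not> E b pc" "close lb lpd \<Longrightarrow> \<not> E b pd" "close lb lpe \<Longrightarrow> \<not> E b pe" "close lu lpb \<Longrightarrow> \<not> E u pb" "close lu lpc \<Longrightarrow> \<not> E u pc" "close lu lpd \<Longrightarrow> \<not> E u pd" "close lu lpe \<Longrightarrow> \<not> E u pe" "close lpa lpc \<Longrightarrow> \<not> E pa pc" "close lpa lpd \<Longrightarrow> \<not> E pa pd" "close lpa lpe \<Longrightarrow> \<not> E pa pe" "close lpb lpd \<Longrightarrow> \<not> E pb pd" "close lpb lpe \<Longrightarrow> \<not> E pb pe" "close lpc lpe \<Longrightarrow> \<not> E pc pe"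
    and d: "lu = la \<Longrightarrow> u \<noteq> a" "lu = lb \<Longrightarrow> u \<noteq> b" "lu = lpa \<Longrightarrow> u \<noteq> pa" "lu = lpb \<Longrightarrow> u \<noteq> pb" "lu = lpc \<Longrightarrow> u \<noteq> pc" "lu = lpd \<Longrightarrow> u \<noteq> pd" "lu = lpe \<Longrightarrow> u \<noteq> pe" "la = lb \<Longrightarrow> a \<noteq> b" "la = lpa \<Longrightarrow> a \<noteq> pa" "la = lpb \<Longrightarrow> a \<noteq> pb" "la = lpc \<Longrightarrow> a \<noteq> pc" "la = lpd \<Longrightarrow> a \<noteq> pd" "la = lpe \<Longrightarrow> a \<noteq> pe" "lb = lpa \<Longrightarrow> b \<noteq> pa" "lb = lpb \<Longrightarrow> b \<noteq> pb" "lb = lpc \<Longrightarrow> b \<noteq> pc" "lb = lpd \<Longrightarrow> b \<noteq> pd" "lb = lpe \<Longrightarrow> b \<noteq> pe" "lpa = lpb \<Longrightarrow> pa \<noteq> pb" "lpa = lpc \<Longrightarrow> pa \<noteq> pc" "lpa = lpd \<Longrightarrow> pa \<noteq> pd" "lpa = lpe \<Longrightarrow> pa \<noteq> pe" "lpb = lpc \<Longrightarrow> pb \<noteq> pc" "lpb = lpd \<Longrightarrow> pb \<noteq> pd" "lpb = lpe \<Longrightarrow> pb \<noteq> pe" "lpc = lpd \<Longrightarrow> pc \<noteq> pd" "lpc = lpe \<Longrightarrow> pc \<noteq> pe" "lpd = lpe \<Longrightarrow> pd \<noteq> pe"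
  shows "has_induced V E 8 S115"
proof -
  have nE: "\<And>u v i j. (close i j \<Longrightarrow> \<not> E u v) \<Longrightarrow> u \<in> N i \<Longrightarrow> v \<in> N j \<Longrightarrow> \<not> E u v"
    using adj g unfolding close_def simple_graph_def by (metis not_less_eq_eq)
  have nD: "\<And>u v i j. (i = j \<Longrightarrow> u \<noteq> v) \<Longrightarrow> u \<in> N i \<Longrightarrow> v \<in> N j \<Longrightarrow> u \<noteq> v"
    using NU by blast
  have n1: "\<not> E a b" by (rule nE[OF n(1) mem(2) mem(3)])
  have n2: "\<not> E a pa" by (rule nE[OF n(2) mem(2) mem(4)])
  have n3: "\<not> E a pb" by (rule nE[OF n(3) mem(2) mem(5)])
  have n4: "\<not> E a pc" by (rule nE[OF n(4) mem(2) mem(6)])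
  have n5: "\<not> E a pd" by (rule nE[OF n(5) mem(2) mem(7)])
  have n6: "\<not> E a pe" by (rule nE[OF n(6) mem(2) mem(8)])
  have n7: "\<not> E b pa" by (rule nE[OF n(7) mem(3) mem(4)])
  have n8: "\<not> E b pb" by (rule nE[OF n(8) mem(3) mem(5)])
  have n9: "\<not> E b pc" by (rule nE[OF n(9) mem(3) mem(6)])
  have n10: "\<not> E b pd" by (rule nE[OF n(10) mem(3) mem(7)])
  have n11: "\<not> E b pe" by (rule nE[OF n(11) mem(3) mem(8)])
  have n12: "\<not> E u pb" by (rule nE[OF n(12) mem(1) mem(5)])
  have n13: "\<not> E u pc" by (rule nE[OF n(13) mem(1) mem(6)])
  have n14: "\<not> E u pd" by (rule nE[OF n(14) mem(1) mem(7)])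
  have n15: "\<not> E u pe" by (rule nE[OF n(15) mem(1) mem(8)])
  have n16: "\<not> E pa pc" by (rule nE[OF n(16) mem(4) mem(6)])
  have n17: "\<not> E pa pd" by (rule nE[OF n(17) mem(4) mem(7)])
  have n18: "\<not> E pa pe" by (rule nE[OF n(18) mem(4) mem(8)])
  have n19: "\<not> E pb pd" by (rule nE[OF n(19) mem(5) mem(7)])
  have n20: "\<not> E pb pe" by (rule nE[OF n(20) mem(5) mem(8)])
  have n21: "\<not> E pc pe" by (rule nE[OF n(21) mem(6) mem(8)])
  have d1: "u \<noteq> a" by (rule nD[OF d(1) mem(1) mem(2)])
  have d2: "u \<noteq> b" by (rule nD[OF d(2) mem(1) mem(3)])
  have d3: "u \<noteq> pa" by (rule nD[OF d(3) mem(1) mem(4)])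
  have d4: "u \<noteq> pb" by (rule nD[OF d(4) mem(1) mem(5)])
  have d5: "u \<noteq> pc" by (rule nD[OF d(5) mem(1) mem(6)])
  have d6: "u \<noteq> pd" by (rule nD[OF d(6) mem(1) mem(7)])
  have d7: "u \<noteq> pe" by (rule nD[OF d(7) mem(1) mem(8)])
  have d8: "a \<noteq> b" by (rule nD[OF d(8) mem(2) mem(3)])
  have d9: "a \<noteq> pa" by (rule nD[OF d(9) mem(2) mem(4)])
  have d10: "a \<noteq> pb" by (rule nD[OF d(10) mem(2) mem(5)])
  have d11: "a \<noteq> pc" by (rule nD[OF d(11) mem(2) mem(6)])
  have d12: "a \<noteq> pd" by (rule nD[OF d(12) mem(2) mem(7)])
  have d13: "a \<noteq> pe" by (rule nD[OF d(13) mem(2) mem(8)])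
  have d14: "b \<noteq> pa" by (rule nD[OF d(14) mem(3) mem(4)])
  have d15: "b \<noteq> pb" by (rule nD[OF d(15) mem(3) mem(5)])
  have d16: "b \<noteq> pc" by (rule nD[OF d(16) mem(3) mem(6)])
  have d17: "b \<noteq> pd" by (rule nD[OF d(17) mem(3) mem(7)])
  have d18: "b \<noteq> pe" by (rule nD[OF d(18) mem(3) mem(8)])
  have d19: "pa \<noteq> pb" by (rule nD[OF d(19) mem(4) mem(5)])
  have d20: "pa \<noteq> pc" by (rule nD[OF d(20) mem(4) mem(6)])
  have d21: "pa \<noteq> pd" by (rule nD[OF d(21) mem(4) mem(7)])
  have d22: "pa \<noteq> pe" by (rule nD[OF d(22) mem(4) mem(8)])
  have d23: "pb \<noteq> pc" by (rule nD[OF d(23) mem(5) mem(6)])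
  have d24: "pb \<noteq> pd" by (rule nD[OF d(24) mem(5) mem(7)])
  have d25: "pb \<noteq> pe" by (rule nD[OF d(25) mem(5) mem(8)])
  have d26: "pc \<noteq> pd" by (rule nD[OF d(26) mem(6) mem(7)])
  have d27: "pc \<noteq> pe" by (rule nD[OF d(27) mem(6) mem(8)])
  have d28: "pd \<noteq> pe" by (rule nD[OF d(28) mem(7) mem(8)])
  have V: "set [u,a,b,pa,pb,pc,pd,pe] \<subseteq> V" using mem NV by auto
  have D: "distinct [u,a,b,pa,pb,pc,pd,pe]" using d1 d2 d3 d4 d5 d6 d7 d8 d9 d10 d11 d12 d13 d14 d15 d16 d17 d18 d19 d20 d21 d22 d23 d24 d25 d26 d27 d28 by simp
  show ?thesis by (rule S115I[OF g V D e n1 n2 n3 n4 n5 n6 n7 n8 n9 n10 n11 n12 n13 n14 n15 n16 n17 n18 n19 n20 n21])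
qed

lemma dk4L:
  assumes g: "simple_graph V E" and adj: "\<And>u v i j. u \<in> N i \<Longrightarrow> v \<in> N j \<Longrightarrow> E u v \<Longrightarrow> j \<le> Suc i"
    and NV: "\<And>z i. z \<in> N i \<Longrightarrow> z \<in> V" and NU: "\<And>z i j. z \<in> N i \<Longrightarrow> z \<in> N j \<Longrightarrow> i = j"
    and mem: "u \<in> N lu" "v \<in> N lv" "s \<in> N ls" "t \<in> N lt"
    and nK: "\<not> has_induced V E 4 K4" and nDi: "\<not> has_induced V E 4 diamond"
    and e: "E u v" "E u s" "E u t" "E v s" "E v t"
    and d: "lu = lv \<Longrightarrow> u \<noteq> v" "lu = ls \<Longrightarrow> u \<noteq> s" "lu = lt \<Longrightarrow> u \<noteq> t" "lv = ls \<Longrightarrow> v \<noteq> s" "lv = lt \<Longrightarrow> v \<noteq> t" "ls = lt \<Longrightarrow> s \<noteq> t"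
  shows "False"
proof -
  have nE: "\<And>u v i j. (close i j \<Longrightarrow> \<not> E u v) \<Longrightarrow> u \<in> N i \<Longrightarrow> v \<in> N j \<Longrightarrow> \<not> E u v"
    using adj g unfolding close_def simple_graph_def by (metis not_less_eq_eq)
  have nD: "\<And>u v i j. (i = j \<Longrightarrow> u \<noteq> v) \<Longrightarrow> u \<in> N i \<Longrightarrow> v \<in> N j \<Longrightarrow> u \<noteq> v"
    using NU by blast
  have d1: "u \<noteq> v" by (rule nD[OF d(1) mem(1) mem(2)])
  have d2: "u \<noteq> s" by (rule nD[OF d(2) mem(1) mem(3)])
  have d3: "u \<noteq> t" by (rule nD[OF d(3) mem(1) mem(4)])
  have d4: "v \<noteq> s" by (rule nD[OF d(4) mem(2) mem(3)])
  have d5: "v \<noteq> t" by (rule nD[OF d(5) mem(2) mem(4)])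
  have d6: "s \<noteq> t" by (rule nD[OF d(6) mem(3) mem(4)])
  have V: "set [u,v,s,t] \<subseteq> V" using mem NV by auto
  have D: "distinct [u,v,s,t]" using d1 d2 d3 d4 d5 d6 by simp
  show ?thesis by (rule dk4[OF g nK nDi V D e ])
qed

lemma butterflyL:
  assumes g: "simple_graph V E" and adj: "\<And>u v i j. u \<in> N i \<Longrightarrow> v \<in> N j \<Longrightarrow> E u v \<Longrightarrow> j \<le> Suc i"
    and NV: "\<And>z i. z \<in> N i \<Longrightarrow> z \<in> V" and NU: "\<And>z i j. z \<in> N i \<Longrightarrow> z \<in> N j \<Longrightarrow> i = j"
    and mem: "u \<in> N lu" "aa \<in> N laa" "ab \<in> N lab" "ba \<in> N lba" "bb \<in> N lbb"
    and e: "E aa ab" "E ba bb" "E u aa" "E u ab" "E u ba" "E u bb"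
    and n: "close laa lba \<Longrightarrow> \<not> E aa ba" "close laa lbb \<Longrightarrow> \<not> E aa bb" "close lab lba \<Longrightarrow> \<not> E ab ba" "close lab lbb \<Longrightarrow> \<not> E ab bb"
    and d: "lu = laa \<Longrightarrow> u \<noteq> aa" "lu = lab \<Longrightarrow> u \<noteq> ab" "lu = lba \<Longrightarrow> u \<noteq> ba" "lu = lbb \<Longrightarrow> u \<noteq> bb" "laa = lab \<Longrightarrow> aa \<noteq> ab" "laa = lba \<Longrightarrow> aa \<noteq> ba" "laa = lbb \<Longrightarrow> aa \<noteq> bb" "lab = lba \<Longrightarrow> ab \<noteq> ba" "lab = lbb \<Longrightarrow> ab \<noteq> bb" "lba = lbb \<Longrightarrow> ba \<noteq> bb"
  shows "has_induced V E 5 butterfly"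
proof -
  have nE: "\<And>u v i j. (close i j \<Longrightarrow> \<not> E u v) \<Longrightarrow> u \<in> N i \<Longrightarrow> v \<in> N j \<Longrightarrow> \<not> E u v"
    using adj g unfolding close_def simple_graph_def by (metis not_less_eq_eq)
  have nD: "\<And>u v i j. (i = j \<Longrightarrow> u \<noteq> v) \<Longrightarrow> u \<in> N i \<Longrightarrow> v \<in> N j \<Longrightarrow> u \<noteq> v"
    using NU by blast
  have n1: "\<not> E aa ba" by (rule nE[OF n(1) mem(2) mem(4)])
  have n2: "\<not> E aa bb" by (rule nE[OF n(2) mem(2) mem(5)])
  have n3: "\<not> E ab ba" by (rule nE[OF n(3) mem(3) mem(4)])
  have n4: "\<not> E ab bb" by (rule nE[OF n(4) mem(3) mem(5)])
  have d1: "u \<noteq> aa" by (rule nD[OF d(1) mem(1) mem(2)])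
  have d2: "u \<noteq> ab" by (rule nD[OF d(2) mem(1) mem(3)])
  have d3: "u \<noteq> ba" by (rule nD[OF d(3) mem(1) mem(4)])
  have d4: "u \<noteq> bb" by (rule nD[OF d(4) mem(1) mem(5)])
  have d5: "aa \<noteq> ab" by (rule nD[OF d(5) mem(2) mem(3)])
  have d6: "aa \<noteq> ba" by (rule nD[OF d(6) mem(2) mem(4)])
  have d7: "aa \<noteq> bb" by (rule nD[OF d(7) mem(2) mem(5)])
  have d8: "ab \<noteq> ba" by (rule nD[OF d(8) mem(3) mem(4)])
  have d9: "ab \<noteq> bb" by (rule nD[OF d(9) mem(3) mem(5)])
  have d10: "ba \<noteq> bb" by (rule nD[OF d(10) mem(4) mem(5)])
  have V: "set [u,aa,ab,ba,bb] \<subseteq> V" using mem NV by auto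
  have D: "distinct [u,aa,ab,ba,bb]" using d1 d2 d3 d4 d5 d6 d7 d8 d9 d10 by simp
  show ?thesis by (rule butterflyI[OF g V D e n1 n2 n3 n4])
qed



lemma core:
  fixes N :: "nat \<Rightarrow> 'a set"
  assumes g: "simple_graph V E"
    and nS: "\<not> has_induced V E 8 S115" and nK: "\<not> has_induced V E 4 K4"
    and nD: "\<not> has_induced V E 4 diamond" and nB: "\<not> has_induced V E 5 butterfly"
    and xy: "E x y" and Ndef: "N = layer V E x y"
    and ind: "\<forall>u\<in>N 2. \<forall>v\<in>N 2. \<not> E u v"
    and uniq: "\<forall>z\<in>N 3. card {w \<in> N 2. E z w} = 1"
    and c5: "card (N 2) \<ge> 5"
    and m: "d1 \<in> N 1" "d2 \<in> N 2" "d3 \<in> N 3" "d4 \<in> N 4" "b \<in> N 5" "c \<in> N 5"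
    and e: "E d1 x" "E d1 d2" "E d2 d3" "E d3 d4" "E d4 b" "E b c" and n4c: "\<not> E d4 c"
  shows False
proof -
  have Esym: "\<And>u v. E u v = E v u" and irr: "\<And>u. \<not> E u u" using g by (auto simp: simple_graph_def)
  have xV: "x \<in> V" "y \<in> V" using xy g by (auto simp: simple_graph_def)
  have xny: "x \<noteq> y" using xy irr by auto
  have N0: "N 0 = {x,y}" using layer0[OF xV] Ndef by simp
  have adjN: "\<And>u v i j. u \<in> N i \<Longrightarrow> v \<in> N j \<Longrightarrow> E u v \<Longrightarrow> j \<le> Suc i" using layer_adj[OF g] Ndef by blast
  have downN: "\<And>z i. z \<in> N (Suc i) \<Longrightarrow> \<exists>w\<in>N i. E z w" using layer_down[OF g] Ndef by blast
  have uniqN: "\<And>z i j. z \<in> N i \<Longrightarrow> z \<in> N j \<Longrightarrow> i = j" using layer_unique Ndef by metis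
  have VN: "\<And>z i. z \<in> N i \<Longrightarrow> z \<in> V" using layer_V Ndef by metis
  have mx: "x \<in> N 0" "y \<in> N 0" using N0 by auto
  have bc: "b \<noteq> c" using e(6) irr by auto
  note ee = e xy n4c xny mx m bc
  note L = g adjN VN uniqN
  have N1xy: "\<And>q. q \<in> N 1 \<Longrightarrow> E q x \<or> E q y" using downN[of _ 0] N0 by auto
  have d3u: "\<And>p. p \<in> N 2 \<Longrightarrow> E d3 p \<Longrightarrow> p = d2"
  proof -
    fix p assume p: "p \<in> N 2" "E d3 p"
    obtain a where a: "{w \<in> N 2. E d3 w} = {a}" using uniq m(3) by (meson card_1_singletonE)
    have "d2 \<in> {w \<in> N 2. E d3 w}" using m(2) e(3) Esym by auto
    moreover have "p \<in> {w \<in> N 2. E d3 w}" using p by auto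
    ultimately show "p = d2" using a by auto
  qed
  have star: "\<And>w p. w \<in> N 1 \<Longrightarrow> E w d2 \<Longrightarrow> p \<in> N 2 \<Longrightarrow> p \<noteq> d2 \<Longrightarrow> E w p \<Longrightarrow> False"
  proof -
    fix w p assume a: "w \<in> N 1" "E w d2" "p \<in> N 2" "p \<noteq> d2" "E w p"
    obtain w0 where w0: "w0 \<in> N 0" "E w w0" using downN[of w 0] a(1) by auto
    have n3: "\<not> E d3 p" using d3u a by blast
    have n2: "\<not> E d2 p" using ind m(2) a(3) by blast
    have "has_induced V E 8 S115"
      by (rule S115L[where N=N and u=w and lu=1 and a=p and la=2 and b=w0 and lb=0 and pa=d2 and lpa=2 and pb=d3 and lpb=3 and pc=d4 and lpc=4 and pd=b and lpd=5 and pe=c and lpe=5, OF L])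
        (use ee a w0 n3 n2 in \<open>simp_all add: close_def Esym\<close>)
    then show False using nS by simp
  qed
  have starstar: "\<And>q p p'. q \<in> N 1 \<Longrightarrow> \<not> E q d2 \<Longrightarrow> p \<in> N 2 \<Longrightarrow> p' \<in> N 2 \<Longrightarrow> p \<noteq> p'
      \<Longrightarrow> E q p \<Longrightarrow> E q p' \<Longrightarrow> False"
  proof -
    fix q p p' assume a: "q \<in> N 1" "\<not> E q d2" "p \<in> N 2" "p' \<in> N 2" "p \<noteq> p'" "E q p" "E q p'"
    have pd: "p \<noteq> d2" "p' \<noteq> d2" using a by auto
    have n1: "\<not> E d1 p" "\<not> E d1 p'" using star[OF m(1) e(2) a(3) pd(1)] star[OF m(1) e(2) a(4) pd(2)] by auto
    have n3: "\<not> E d3 p" "\<not> E d3 p'" using d3u a pd by blast+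
    have n2: "\<not> E d2 p" "\<not> E d2 p'" "\<not> E p p'" using ind m(2) a(3,4) by blast+
    have qd: "q \<noteq> d1" using a(2) e(2) by auto
    note loc = ee a pd n1 n2 n3 qd
    show False
    proof (cases "E q d1")
      case True
      have "has_induced V E 8 S115"
        by (rule S115L[where N=N and u=q and lu=1 and a=p and la=2 and b=p' and lb=2 and pa=d1 and lpa=1 and pb=d2 and lpb=2 and pc=d3 and lpc=3 and pd=d4 and lpd=4 and pe=b and lpe=5, OF L]) (use loc True in \<open>simp_all add: close_def Esym\<close>)
      then show False using nS by simp
    next
      case qd1: False
      show False
      proof (cases "E q x")
        case True
        have "has_induced V E 8 S115"
          by (rule S115L[where N=N and u=q and lu=1 and a=p and la=2 and b=p' and lb=2 and pa=x and lpa=0 and pb=d1 and lpb=1 and pc=d2 and lpc=2 and pd=d3 and lpd=3 and pe=d4 and lpe=4, OF L]) (use loc True qd1 in \<open>simp_all add: close_def Esym\<close>)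
        then show False using nS by simp
      next
        case qx: False
        hence qy: "E q y" using N1xy a(1) by blast
        show False
        proof (cases "E d1 y")
          case True
          have "has_induced V E 8 S115"
            by (rule S115L[where N=N and u=q and lu=1 and a=p and la=2 and b=p' and lb=2 and pa=y and lpa=0 and pb=d1 and lpb=1 and pc=d2 and lpc=2 and pd=d3 and lpd=3 and pe=d4 and lpe=4, OF L]) (use loc True qd1 qy in \<open>simp_all add: close_def Esym\<close>)
          then show False using nS by simp
        next
          case False
          have "has_induced V E 8 S115"
            by (rule S115L[where N=N and u=q and lu=1 and a=p and la=2 and b=p' and lb=2 and pa=y and lpa=0 and pb=x and lpb=0 and pc=d1 and lpc=1 and pd=d2 and lpd=2 and pe=d3 and lpe=3, OF L]) (use loc False qd1 qx qy in \<open>simp_all add: close_def Esym\<close>)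
          then show False using nS by simp
        qed
      qed
    qed
  qed
  have "N 2 \<subseteq> V" using VN by blast
  hence finN2: "finite (N 2)" using g finite_subset unfolding simple_graph_def by blast
  have "\<forall>p\<in>N 2. \<exists>w. w \<in> N 1 \<and> E p w" using downN[of _ 1] by (simp add: Bex_def numeral_2_eq_2)
  then obtain qf where qf: "\<forall>p\<in>N 2. qf p \<in> N 1 \<and> E p (qf p)" by metis
  define P' where "P' = N 2 - {d2}"
  have cP': "4 \<le> card P'" using c5 m(2) finN2 unfolding P'_def by (simp add: card_Diff_singleton)
  have finP': "finite P'" using finN2 unfolding P'_def by simp
  have qfQ: "\<And>p. p \<in> P' \<Longrightarrow> qf p \<in> N 1 \<and> \<not> E (qf p) d2"
  proof -
    fix p assume p: "p \<in> P'"
    have "qf p \<in> N 1" "E p (qf p)" using qf p unfolding P'_def by auto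
    moreover have "\<not> E (qf p) d2" using star[of "qf p" p] p calculation Esym unfolding P'_def by blast
    ultimately show "qf p \<in> N 1 \<and> \<not> E (qf p) d2" by blast
  qed
  have "inj_on qf P'"
  proof (rule inj_onI)
    fix p p' assume a: "p \<in> P'" "p' \<in> P'" "qf p = qf p'"
    show "p = p'"
    proof (rule ccontr)
      assume "p \<noteq> p'"
      moreover have "E (qf p) p" "E (qf p) p'" using qf a Esym unfolding P'_def by auto
      ultimately show False using starstar[of "qf p" p p'] qfQ[OF a(1)] a unfolding P'_def by blast
    qed
  qed
  hence "4 \<le> card (qf ` P')" using cP' by (simp add: card_image)
  then obtain q1 q2 q3 q4 where qs: "q1 \<in> qf ` P'" "q2 \<in> qf ` P'" "q3 \<in> qf ` P'" "q4 \<in> qf ` P'"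
    "distinct [q1,q2,q3,q4]" using four_elems[of "qf ` P'"] finP' by blast
  define Q where "Q = {q \<in> N 1. \<not> E q d2}"
  have qQ: "q1 \<in> Q" "q2 \<in> Q" "q3 \<in> Q" "q4 \<in> Q" using qs(1-4) qfQ unfolding Q_def by auto
  have Qd1: "\<And>q. q \<in> Q \<Longrightarrow> q \<noteq> d1" using e(2) unfolding Q_def by auto
  have Qn: "\<And>q. q \<in> Q \<Longrightarrow> q \<in> N 1 \<and> \<not> E q d2" unfolding Q_def by auto
  show False
  proof (cases "E d1 y")
    case d1y: True
    have cC6: "\<And>w. w \<in> N 1 \<Longrightarrow> E w x \<Longrightarrow> E w y \<Longrightarrow> w \<noteq> d1 \<Longrightarrow> False"
    proof -
      fix w assume a: "w \<in> N 1" "E w x" "E w y" "w \<noteq> d1"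
      show False
        by (rule dk4L[where N=N and u=x and lu=0 and v=y and lv=0 and s=w and ls=1 and t=d1 and lt=1, OF L]) (use ee a d1y nK nD in \<open>simp_all add: Esym\<close>)
    qed
    have cC1: "\<And>q. q \<in> Q \<Longrightarrow> E q d1 \<Longrightarrow> False"
    proof -
      fix q assume a: "q \<in> Q" "E q d1"
      note loc = ee a Qn[OF a(1)] Qd1[OF a(1)] d1y
      show False
      proof (cases "E q x")
        case True
        have ny: "\<not> E q y" using True cC6 Qn[OF a(1)] Qd1[OF a(1)] by blast
        have "has_induced V E 8 S115"
          by (rule S115L[where N=N and u=d1 and lu=1 and a=y and la=0 and b=q and lb=1 and pa=d2 and lpa=2 and pb=d3 and lpb=3 and pc=d4 and lpc=4 and pd=b and lpd=5 and pe=c and lpe=5, OF L]) (use loc True ny in \<open>simp_all add: close_def Esym\<close>)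
        then show False using nS by simp
      next
        case False
        hence "E q y" using N1xy Qn[OF a(1)] by blast
        have "has_induced V E 8 S115"
          by (rule S115L[where N=N and u=d1 and lu=1 and a=x and la=0 and b=q and lb=1 and pa=d2 and lpa=2 and pb=d3 and lpb=3 and pc=d4 and lpc=4 and pd=b and lpd=5 and pe=c and lpe=5, OF L]) (use loc False \<open>E q y\<close> in \<open>simp_all add: close_def Esym\<close>)
        then show False using nS by simp
      qed
    qed
    have cC4: "\<And>z q q'. z \<in> N 0 \<Longrightarrow> q \<in> Q \<Longrightarrow> q' \<in> Q \<Longrightarrow> q \<noteq> q' \<Longrightarrow> E q z \<Longrightarrow> E q' z \<Longrightarrow> E q q'"
    proof (rule ccontr)
      fix z q q' assume a: "z \<in> N 0" "q \<in> Q" "q' \<in> Q" "q \<noteq> q'" "E q z" "E q' z" "\<not> E q q'"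
      have zd1: "E z d1" using a(1) N0 e(1) d1y Esym by auto
      have n1: "\<not> E q d1" "\<not> E q' d1" using cC1 a by auto
      have "has_induced V E 8 S115"
        by (rule S115L[where N=N and u=z and lu=0 and a=q and la=1 and b=q' and lb=1 and pa=d1 and lpa=1 and pb=d2 and lpb=2 and pc=d3 and lpc=3 and pd=d4 and lpd=4 and pe=b and lpe=5, OF L])
         (use ee a zd1 Qn[OF a(2)] Qn[OF a(3)] n1 Qd1[OF a(2)] Qd1[OF a(3)] in \<open>simp_all add: close_def Esym\<close>)
      then show False using nS by simp
    qed
    have bf: "\<And>z z' q q'. z \<in> N 0 \<Longrightarrow> z' \<in> N 0 \<Longrightarrow> z \<noteq> z' \<Longrightarrow> q \<in> Q \<Longrightarrow> q' \<in> Q \<Longrightarrow> q \<noteq> q'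
       \<Longrightarrow> E q z \<Longrightarrow> E q' z \<Longrightarrow> False"
    proof -
      fix z z' q q' assume a: "z \<in> N 0" "z' \<in> N 0" "z \<noteq> z'" "q \<in> Q" "q' \<in> Q" "q \<noteq> q'" "E q z" "E q' z"
      have zz: "{z, z'} = {x, y}" using a(1-3) N0 by auto
      have f1: "\<not> E q z'" "\<not> E q' z'" using cC6 a zz Qn Qd1 by (metis doubleton_eq_iff)+
      have f2: "E q q'" using cC4 a by blast
      have f3: "\<not> E q d1" "\<not> E q' d1" using cC1 a by auto
      have f4: "E z z'" "E z' d1" "E z d1" using zz xy e(1) d1y Esym by (auto simp: doubleton_eq_iff)
      have "has_induced V E 5 butterfly"
        by (rule butterflyL[where N=N and u=z and lu=0 and aa=q and laa=1 and ab=q' and lab=1 and ba=z' and lba=0 and bb=d1 and lbb=1, OF L])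
          (use ee a f1 f2 f3 f4 Qn[OF a(4)] Qn[OF a(5)] Qd1[OF a(4)] Qd1[OF a(5)] in \<open>simp_all add: close_def Esym\<close>)
      then show False using nB by simp
    qed
    have "E q1 x \<or> E q1 y" "E q2 x \<or> E q2 y" "E q3 x \<or> E q3 y" using N1xy Qn qQ by blast+
    then show False using bf[of x y] bf[of y x] mx xny qQ qs(5) by auto
  next
    case d1y: False
    have c1: "\<And>q. q \<in> Q \<Longrightarrow> E q x \<Longrightarrow> \<not> E q y \<Longrightarrow> E q d1"
    proof (rule ccontr)
      fix q assume a: "q \<in> Q" "E q x" "\<not> E q y" "\<not> E q d1"
      have "has_induced V E 8 S115"
        by (rule S115L[where N=N and u=x and lu=0 and a=y and la=0 and b=q and lb=1 and pa=d1 and lpa=1 and pb=d2 and lpb=2 and pc=d3 and lpc=3 and pd=d4 and lpd=4 and pe=b and lpe=5, OF L])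
          (use ee a d1y Qn[OF a(1)] Qd1[OF a(1)] in \<open>simp_all add: close_def Esym\<close>)
      then show False using nS by simp
    qed
    have c2: "\<And>q q'. q \<in> Q \<Longrightarrow> q' \<in> Q \<Longrightarrow> q \<noteq> q' \<Longrightarrow> E q x \<Longrightarrow> E q' x \<Longrightarrow> E q d1 \<Longrightarrow> E q' d1 \<Longrightarrow> False"
    proof -
      fix q q' assume a: "q \<in> Q" "q' \<in> Q" "q \<noteq> q'" "E q x" "E q' x" "E q d1" "E q' d1"
      show False
        by (rule dk4L[where N=N and u=x and lu=0 and v=d1 and lv=1 and s=q and ls=1 and t=q' and lt=1, OF L])
          (use ee a nK nD Qn[OF a(1)] Qn[OF a(2)] Qd1[OF a(1)] Qd1[OF a(2)] in \<open>simp_all add: Esym\<close>)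
    qed
    have c3: "\<And>q. q \<in> Q \<Longrightarrow> E q y \<Longrightarrow> \<not> E q x \<Longrightarrow> \<not> E q d1"
    proof
      fix q assume a: "q \<in> Q" "E q y" "\<not> E q x" "E q d1"
      have "has_induced V E 8 S115"
        by (rule S115L[where N=N and u=d1 and lu=1 and a=x and la=0 and b=q and lb=1 and pa=d2 and lpa=2 and pb=d3 and lpb=3 and pc=d4 and lpc=4 and pd=b and lpd=5 and pe=c and lpe=5, OF L])
          (use ee a d1y Qn[OF a(1)] Qd1[OF a(1)] in \<open>simp_all add: close_def Esym\<close>)
      then show False using nS by simp
    qed
    have c4: "\<And>q q'. q \<in> Q \<Longrightarrow> q' \<in> Q \<Longrightarrow> q \<noteq> q' \<Longrightarrow> E q y \<Longrightarrow> E q' y \<Longrightarrow> \<not> E q x \<Longrightarrow> \<not> E q' x \<Longrightarrow> E q q'"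
    proof (rule ccontr)
      fix q q' assume a: "q \<in> Q" "q' \<in> Q" "q \<noteq> q'" "E q y" "E q' y" "\<not> E q x" "\<not> E q' x" "\<not> E q q'"
      have n1: "\<not> E q d1" "\<not> E q' d1" using c3 a by auto
      have "has_induced V E 8 S115"
        by (rule S115L[where N=N and u=y and lu=0 and a=q and la=1 and b=q' and lb=1 and pa=x and lpa=0 and pb=d1 and lpb=1 and pc=d2 and lpc=2 and pd=d3 and lpd=3 and pe=d4 and lpe=4, OF L])
          (use ee a d1y n1 Qn[OF a(1)] Qn[OF a(2)] Qd1[OF a(1)] Qd1[OF a(2)] in \<open>simp_all add: close_def Esym\<close>)
      then show False using nS by simp
    qed
    have c5: "\<And>q q' q''. q \<in> Q \<Longrightarrow> q' \<in> Q \<Longrightarrow> q'' \<in> Q \<Longrightarrow> q \<noteq> q' \<Longrightarrow> q \<noteq> q'' \<Longrightarrow> q' \<noteq> q''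
       \<Longrightarrow> E q y \<Longrightarrow> E q' y \<Longrightarrow> E q'' y \<Longrightarrow> \<not> E q x \<Longrightarrow> \<not> E q' x \<Longrightarrow> \<not> E q'' x \<Longrightarrow> False"
    proof -
      fix q q' q'' assume a: "q \<in> Q" "q' \<in> Q" "q'' \<in> Q" "q \<noteq> q'" "q \<noteq> q''" "q' \<noteq> q''"
        "E q y" "E q' y" "E q'' y" "\<not> E q x" "\<not> E q' x" "\<not> E q'' x"
      have f: "E q q'" "E q q''" "E q' q''" using c4 a by blast+
      show False
        by (rule dk4L[where N=N and u=y and lu=0 and v=q and lv=1 and s=q' and ls=1 and t=q'' and lt=1, OF L])
          (use ee a f nK nD Qn[OF a(1)] Qn[OF a(2)] Qn[OF a(3)] in \<open>simp_all add: Esym\<close>)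
    qed
    have cCC: "\<And>w w'. w \<in> N 1 \<Longrightarrow> w' \<in> N 1 \<Longrightarrow> w \<noteq> w' \<Longrightarrow> E w x \<Longrightarrow> E w y \<Longrightarrow> E w' x \<Longrightarrow> E w' y \<Longrightarrow> False"
    proof -
      fix w w' assume a: "w \<in> N 1" "w' \<in> N 1" "w \<noteq> w'" "E w x" "E w y" "E w' x" "E w' y"
      show False
        by (rule dk4L[where N=N and u=x and lu=0 and v=y and lv=0 and s=w and ls=1 and t=w' and lt=1, OF L]) (use ee a nK nD in \<open>simp_all add: Esym\<close>)
    qed
    have c7: "\<And>q q' w. q \<in> Q \<Longrightarrow> q' \<in> Q \<Longrightarrow> w \<in> Q \<Longrightarrow> q \<noteq> q' \<Longrightarrow> E q y \<Longrightarrow> E q' y \<Longrightarrow> \<not> E q x \<Longrightarrow> \<not> E q' x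
       \<Longrightarrow> E w x \<Longrightarrow> E w y \<Longrightarrow> False"
    proof -
      fix q q' w assume a: "q \<in> Q" "q' \<in> Q" "w \<in> Q" "q \<noteq> q'" "E q y" "E q' y" "\<not> E q x" "\<not> E q' x"
        "E w x" "E w y"
      have f: "E q q'" using c4 a by blast
      have wq: "w \<noteq> q" "w \<noteq> q'" using a by auto
      have nwq: "\<not> E w q"
      proof
        assume h: "E w q"
        show False
          by (rule dk4L[where N=N and u=y and lu=0 and v=q and lv=1 and s=w and ls=1 and t=q' and lt=1, OF L])
            (use ee a f h wq nK nD Qn[OF a(1)] Qn[OF a(2)] Qn[OF a(3)] in \<open>simp_all add: Esym\<close>)
      qed
      have nwq': "\<not> E w q'"
      proof
        assume h: "E w q'"
        show False
          by (rule dk4L[where N=N and u=y and lu=0 and v=q' and lv=1 and s=w and ls=1 and t=q and lt=1, OF L])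
            (use ee a f h wq nK nD Qn[OF a(1)] Qn[OF a(2)] Qn[OF a(3)] in \<open>simp_all add: Esym\<close>)
      qed
      have "has_induced V E 5 butterfly"
        by (rule butterflyL[where N=N and u=y and lu=0 and aa=x and laa=0 and ab=w and lab=1 and ba=q and lba=1 and bb=q' and lbb=1, OF L])
          (use ee a f wq nwq nwq' Qn[OF a(1)] Qn[OF a(2)] Qn[OF a(3)] in \<open>simp_all add: close_def Esym\<close>)
      then show False using nB by simp
    qed
    have sub: "{q1,q2,q3,q4} \<subseteq> Q" using qQ by auto
    have gA: "\<And>u v. u \<in> Q \<Longrightarrow> v \<in> Q \<Longrightarrow> E u x \<and> \<not> E u y \<Longrightarrow> E v x \<and> \<not> E v y \<Longrightarrow> u = v"
      using c1 c2 by blast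
    have gC: "\<And>u v. u \<in> Q \<Longrightarrow> v \<in> Q \<Longrightarrow> E u x \<and> E u y \<Longrightarrow> E v x \<and> E v y \<Longrightarrow> u = v"
      using cCC Qn by blast
    have gB: "\<And>u v w. u \<in> Q \<Longrightarrow> v \<in> Q \<Longrightarrow> w \<in> Q \<Longrightarrow> E u y \<and> \<not> E u x \<Longrightarrow> E v y \<and> \<not> E v x \<Longrightarrow> E w y \<and> \<not> E w x
       \<Longrightarrow> u \<noteq> v \<Longrightarrow> u \<noteq> w \<Longrightarrow> v \<noteq> w \<Longrightarrow> False"
      using c5 by blast
    have gBC: "\<And>u v w. u \<in> Q \<Longrightarrow> v \<in> Q \<Longrightarrow> w \<in> Q \<Longrightarrow> E u y \<and> \<not> E u x \<Longrightarrow> E v y \<and> \<not> E v x \<Longrightarrow> E w x \<and> E w y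
       \<Longrightarrow> u \<noteq> v \<Longrightarrow> False"
      using c7 by blast
    have gABC: "\<And>u. u \<in> Q \<Longrightarrow> (E u x \<and> \<not> E u y) \<or> (E u y \<and> \<not> E u x) \<or> (E u x \<and> E u y)"
      using N1xy Qn by blast
    show False
    proof (rule pigeon_A[of q1 q2 q3 q4 "\<lambda>q. E q x \<and> \<not> E q y" "\<lambda>q. E q y \<and> \<not> E q x" "\<lambda>q. E q x \<and> E q y"])
      show "distinct [q1, q2, q3, q4]" by (rule qs(5))
      show "\<forall>q\<in>{q1, q2, q3, q4}. (E q x \<and> \<not> E q y) \<or> (E q y \<and> \<not> E q x) \<or> (E q x \<and> E q y)"
        using gABC sub by blast
      show "\<forall>u\<in>{q1, q2, q3, q4}. \<forall>v\<in>{q1, q2, q3, q4}. (E u x \<and> \<not> E u y) \<longrightarrow> (E v x \<and> \<not> E v y) \<longrightarrow> u = v"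
      proof (intro ballI impI)
        fix u v assume "u \<in> {q1, q2, q3, q4}" "v \<in> {q1, q2, q3, q4}" "E u x \<and> \<not> E u y" "E v x \<and> \<not> E v y"
        then show "u = v" using gA[of u v] sub by blast
      qed
      show "\<forall>u\<in>{q1, q2, q3, q4}. \<forall>v\<in>{q1, q2, q3, q4}. (E u x \<and> E u y) \<longrightarrow> (E v x \<and> E v y) \<longrightarrow> u = v"
      proof (intro ballI impI)
        fix u v assume "u \<in> {q1, q2, q3, q4}" "v \<in> {q1, q2, q3, q4}" "E u x \<and> E u y" "E v x \<and> E v y"
        then show "u = v" using gC[of u v] sub by blast
      qed
      show "\<forall>u\<in>{q1, q2, q3, q4}. \<forall>v\<in>{q1, q2, q3, q4}. \<forall>w\<in>{q1, q2, q3, q4}. (E u y \<and> \<not> E u x) \<longrightarrow> (E v y \<and> \<not> E v x) \<longrightarrow> (E w y \<and> \<not> E w x) \<longrightarrow> u \<noteq> v \<longrightarrow> u \<noteq> w \<longrightarrow> v \<noteq> w \<longrightarrow> False"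
      proof (intro ballI impI)
        fix u v w assume "u \<in> {q1, q2, q3, q4}" "v \<in> {q1, q2, q3, q4}" "w \<in> {q1, q2, q3, q4}"
          "E u y \<and> \<not> E u x" "E v y \<and> \<not> E v x" "E w y \<and> \<not> E w x" "u \<noteq> v" "u \<noteq> w" "v \<noteq> w"
        then show False using gB[of u v w] sub by blast
      qed
      show "\<forall>u\<in>{q1, q2, q3, q4}. \<forall>v\<in>{q1, q2, q3, q4}. \<forall>w\<in>{q1, q2, q3, q4}. (E u y \<and> \<not> E u x) \<longrightarrow> (E v y \<and> \<not> E v x) \<longrightarrow> (E w x \<and> E w y) \<longrightarrow> u \<noteq> v \<longrightarrow> False"
      proof (intro ballI impI)
        fix u v w assume "u \<in> {q1, q2, q3, q4}" "v \<in> {q1, q2, q3, q4}" "w \<in> {q1, q2, q3, q4}"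
          "E u y \<and> \<not> E u x" "E v y \<and> \<not> E v x" "E w x \<and> E w y" "u \<noteq> v"
        then show False using gBC[of u v w] sub by blast
      qed
    qed
  qed
qed

theorem lemma28:
  fixes V :: "'a set" and E :: "'a \<Rightarrow> 'a \<Rightarrow> bool" and x y r :: 'a
  assumes "simple_graph V E"
    and "\<not> has_induced V E 8 S115"
    and "\<not> has_induced V E 4 K4"
    and "\<not> has_induced V E 4 diamond"
    and "\<not> has_induced V E 5 butterfly"
    and "E x y"
    and "r \<in> V" and "E r x" and "\<not> E r y"
    and "\<forall>u\<in>layer V E x y 2. \<forall>v\<in>layer V E x y 2. \<not> E u v"
    and "\<forall>z\<in>layer V E x y 3. card {w \<in> layer V E x y 2. E z w} = 1"
    and "card (layer V E x y 2) \<ge> 5"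
    and "layer V E x y 5 \<noteq> {}"
  shows "\<not> has_induced (layer V E x y 5) E 3 P3 \<and> \<not> has_induced (layer V E x y 5) E 3 K3"
proof -
  note g = assms(1)
  define N where "N = layer V E x y"
  have N_def': "N = layer V E y x" unfolding N_def by (rule ext) (rule layer_sym)
  have Esym: "\<And>u v. E u v = E v u" and irr: "\<And>u. \<not> E u u" using g by (auto simp: simple_graph_def)
  have xV: "x \<in> V" "y \<in> V" using assms(6) g by (auto simp: simple_graph_def)
  have N0: "N 0 = {x,y}" using layer0[OF xV] N_def by simp
  have adjN: "\<And>u v i j. u \<in> N i \<Longrightarrow> v \<in> N j \<Longrightarrow> E u v \<Longrightarrow> j \<le> Suc i" using layer_adj[OF g] N_def by blast
  have downN: "\<And>z i. z \<in> N (Suc i) \<Longrightarrow> \<exists>w\<in>N i. E z w" using layer_down[OF g] N_def by blast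
  have uniqN: "\<And>z i j. z \<in> N i \<Longrightarrow> z \<in> N j \<Longrightarrow> i = j" using layer_unique N_def by metis
  have VN: "\<And>z i. z \<in> N i \<Longrightarrow> z \<in> V" using layer_V N_def by metis
  note L = g adjN VN uniqN
  note nK = assms(3) and nD = assms(4)
  have ind: "\<forall>u\<in>N 2. \<forall>v\<in>N 2. \<not> E u v" using assms(10) N_def by simp
  have uniq: "\<forall>z\<in>N 3. card {w \<in> N 2. E z w} = 1" using assms(11) N_def by simp
  have c5: "card (N 2) \<ge> 5" using assms(12) N_def by simp
  have key: "\<And>f0 f1 f2. f0 \<in> N 5 \<Longrightarrow> f1 \<in> N 5 \<Longrightarrow> f2 \<in> N 5 \<Longrightarrow> distinct [f0,f1,f2] \<Longrightarrow> E f0 f1 \<Longrightarrow> E f1 f2 \<Longrightarrow> False"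
  proof -
    fix f0 f1 f2 assume a: "f0 \<in> N 5" "f1 \<in> N 5" "f2 \<in> N 5" "distinct [f0,f1,f2]" "E f0 f1" "E f1 f2"
    obtain d4 where d4: "d4 \<in> N 4" "E f1 d4" using downN[of f1 4] a(2) by auto
    have "\<exists>c. c \<in> N 5 \<and> E f1 c \<and> \<not> E d4 c"
    proof (cases "E d4 f0")
      case False then show ?thesis using a Esym by blast
    next
      case T0: True
      show ?thesis
      proof (cases "E d4 f2")
        case False then show ?thesis using a by blast
      next
        case True
        have dd: "f1 \<noteq> f0" "f2 \<noteq> f0" "f2 \<noteq> f1" "f0 \<noteq> f1" "f0 \<noteq> f2" "f1 \<noteq> f2" using a(4) by auto
        have False
          by (rule dk4L[where N=N and u=f1 and lu=5 and v=d4 and lv=4 and s=f0 and ls=5 and t=f2 and lt=5, OF L]) (use a d4 T0 True nK nD dd in \<open>simp_all add: Esym\<close>)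
        then show ?thesis ..
      qed
    qed
    then obtain c where c: "c \<in> N 5" "E f1 c" "\<not> E d4 c" by blast
    obtain d3 where d3: "d3 \<in> N 3" "E d4 d3" using downN[of d4 3] d4(1) by auto
    obtain d2 where d2: "d2 \<in> N 2" "E d3 d2" using downN[of d3 2] d3(1) by auto
    obtain d1 where d1: "d1 \<in> N 1" "E d2 d1" using downN[of d2 1] d2(1) by (auto simp: numeral_2_eq_2)
    obtain d0 where d0: "d0 \<in> N 0" "E d1 d0" using downN[of d1 0] d1(1) by auto
    have e: "E d1 d2" "E d2 d3" "E d3 d4" "E d4 f1" using d1 d2 d3 d4 Esym by auto
    show False
    proof (cases "d0 = x")
      case True
      show False by (rule core[OF g assms(2-6) N_def ind uniq c5 d1(1) d2(1) d3(1) d4(1) a(2) c(1)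
          d0(2)[unfolded True] e c(2) c(3)])
    next
      case False
      hence "d0 = y" using d0(1) N0 by auto
      have yx: "E y x" using assms(6) Esym by auto
      show False by (rule core[OF g assms(2-5) yx N_def' ind uniq c5 d1(1) d2(1) d3(1) d4(1) a(2) c(1)
          d0(2)[unfolded \<open>d0 = y\<close>] e c(2) c(3)])
    qed
  qed
  have "\<not> has_induced (N 5) E 3 P3"
  proof
    assume h: "has_induced (N 5) E 3 P3"
    obtain f0 f1 f2 where f: "f0 \<in> N 5" "f1 \<in> N 5" "f2 \<in> N 5" "distinct [f0,f1,f2]"
      "E f0 f1 = P3 0 1" "E f1 f2 = P3 1 2" using get3[OF h] by blast
    show False using key[OF f(1-4)] f(5,6) by (simp add: P3_def sym_edges_def)
  qed
  moreover have "\<not> has_induced (N 5) E 3 K3"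
  proof
    assume h: "has_induced (N 5) E 3 K3"
    obtain f0 f1 f2 where f: "f0 \<in> N 5" "f1 \<in> N 5" "f2 \<in> N 5" "distinct [f0,f1,f2]"
      "E f0 f1 = K3 0 1" "E f1 f2 = K3 1 2" using get3[OF h] by blast
    show False using key[OF f(1-4)] f(5,6) by (simp add: K3_def sym_edges_def)
  qed
  ultimately show ?thesis unfolding N_def by simp
qed

end
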